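(* Let $M$ be a smooth manifold with a smooth $\mathbb{C}^*$-action $\sigma_M:\mathbb{C}^*\times M\to M$. Then there is no smooth map $\tilde\sigma_M:\mathbb{CP}^1\times M\to M$ with $\tilde\sigma_M=\sigma_M$ on $\mathbb{C}^*\times M$, unless the action $\sigma_M$ is trivial (i.e. $\sigma_M(\xi,x)=x$ for all $\xi\in\mathbb{C}^*$, $x\in M$). *)

theory Defs
  imports "HOL-Analysis.Analysis"
begin

fun iter_dd :: "'a::real_normed_vector list \<Rightarrow> ('a \<Rightarrow> 'b::real_normed_vector) \<Rightarrow> 'a \<Rightarrow> 'b" where
  "iter_dd [] f = f"
| "iter_dd (v # vs) f = (\<lambda>x. vector_derivative (\<lambda>t. iter_dd vs f (x + t *\<^sub>R v)) (at 0))"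

definition smooth_on :: "'a::euclidean_space set \<Rightarrow> ('a \<Rightarrow> 'b::euclidean_space) \<Rightarrow> bool" where
  "smooth_on S f \<longleftrightarrow>
     (\<forall>vs. continuous_on S (iter_dd vs f) \<and>
       (\<forall>v. \<forall>x\<in>S. ((\<lambda>t::real. iter_dd vs f (x + t *\<^sub>R v))
                      has_vector_derivative iter_dd (v # vs) f x) (at 0)))"

definition smooth_manifold ::
  "'m::{t2_space, second_countable_topology} set \<Rightarrow> (('m \<Rightarrow> 'e::euclidean_space) \<times> 'm set) set \<Rightarrow> bool" where
  "smooth_manifold M A \<longleftrightarrow>
     M = \<Union> (snd ` A) \<and>
     (\<forall>(\<phi>, U)\<in>A. openin (top_of_set M) U \<and> open (\<phi> ` U) \<and>
                   homeomorphism U (\<phi> ` U) \<phi> (inv_into U \<phi>)) \<and>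
     (\<forall>(\<phi>, U)\<in>A. \<forall>(\<psi>, V)\<in>A. smooth_on (\<phi> ` (U \<inter> V)) (\<psi> \<circ> inv_into U \<phi>))"

text \<open>Smooth maps F : D \<rightarrow> M where D \<subseteq> \<complex> \<times> M is open (here D = \<complex> \<times> M or \<complex>* \<times> M),
  \<complex> \<times> M carrying the product manifold structure (identity chart on \<complex>).\<close>
definition smooth_map_CxM ::
  "'m::{t2_space, second_countable_topology} set \<Rightarrow> (('m \<Rightarrow> 'e::euclidean_space) \<times> 'm set) set
   \<Rightarrow> (complex \<times> 'm) set \<Rightarrow> (complex \<times> 'm \<Rightarrow> 'm) \<Rightarrow> bool" where
  "smooth_map_CxM M A D F \<longleftrightarrow>
     continuous_on D F \<and> F ` D \<subseteq> M \<and>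
     (\<forall>(\<phi>, U)\<in>A. \<forall>(\<psi>, V)\<in>A.
        smooth_on {(z, u). u \<in> \<phi> ` U \<and> (z, inv_into U \<phi> u) \<in> D \<and> F (z, inv_into U \<phi> u) \<in> V}
                  (\<lambda>(z, u). \<psi> (F (z, inv_into U \<phi> u))))"

definition smooth_Cstar_action ::
  "'m::{t2_space, second_countable_topology} set \<Rightarrow> (('m \<Rightarrow> 'e::euclidean_space) \<times> 'm set) set
   \<Rightarrow> (complex \<times> 'm \<Rightarrow> 'm) \<Rightarrow> bool" where
  "smooth_Cstar_action M A \<sigma> \<longleftrightarrow>
     smooth_map_CxM M A ((- {0}) \<times> M) \<sigma> \<and>
     (\<forall>x\<in>M. \<sigma> (1, x) = x) \<and>
     (\<forall>\<xi> \<eta> x. \<xi> \<noteq> 0 \<longrightarrow> \<eta> \<noteq> 0 \<longrightarrow> x \<in> M \<longrightarrow> \<sigma> (\<xi>, \<sigma> (\<eta>, x)) = \<sigma> (\<xi> * \<eta>, x))"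

text \<open>CP^1 is modelled as complex option (None = the point at infinity), with its
  standard atlas of two charts: z \<mapsto> z on CP^1 - {\<infinity>} and z \<mapsto> 1/z (\<infinity> \<mapsto> 0) on CP^1 - {0}.\<close>
definition smooth_CP1_map ::
  "'m::{t2_space, second_countable_topology} set \<Rightarrow> (('m \<Rightarrow> 'e::euclidean_space) \<times> 'm set) set
   \<Rightarrow> (complex option \<times> 'm \<Rightarrow> 'm) \<Rightarrow> bool" where
  "smooth_CP1_map M A F \<longleftrightarrow>
     smooth_map_CxM M A (UNIV \<times> M) (\<lambda>(z, x). F (Some z, x)) \<and>
     smooth_map_CxM M A (UNIV \<times> M)
        (\<lambda>(w, x). F (if w = 0 then None else Some (inverse w), x))"

end

theory Submission
  imports Defs
begin

theorem proposition9p1: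
  fixes M :: "'m::{t2_space, second_countable_topology} set"
    and A :: "(('m \<Rightarrow> 'e::euclidean_space) \<times> 'm set) set"
    and \<sigma> :: "complex \<times> 'm \<Rightarrow> 'm"
  assumes "smooth_manifold M A"
    and "smooth_Cstar_action M A \<sigma>"
    and "\<exists>\<sigma>t :: complex option \<times> 'm \<Rightarrow> 'm. smooth_CP1_map M A \<sigma>t \<and>
           (\<forall>\<xi> x. \<xi> \<noteq> 0 \<longrightarrow> x \<in> M \<longrightarrow> \<sigma>t (Some \<xi>, x) = \<sigma> (\<xi>, x))"
  shows "\<forall>\<xi> x. \<xi> \<noteq> 0 \<longrightarrow> x \<in> M \<longrightarrow> \<sigma> (\<xi>, x) = x"
proof (intro allI impI)
  fix \<xi> :: complex and x assume \<xi>: "\<xi> \<noteq> 0" and x: "x \<in> M"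
  obtain F where sF: "smooth_CP1_map M A F"
    and ext: "\<And>\<xi> x. \<xi> \<noteq> 0 \<Longrightarrow> x \<in> M \<Longrightarrow> F (Some \<xi>, x) = \<sigma> (\<xi>, x)"
    using assms(3) by blast
  define G0 where "G0 = (\<lambda>(z, x). F (Some z, x))"
  define Gi where "Gi = (\<lambda>(w::complex, x). F (if w = 0 then None else Some (inverse w), x))"
  have cG0: "continuous_on (UNIV \<times> M) G0" and G0M: "G0 ` (UNIV \<times> M) \<subseteq> M"
    using sF unfolding smooth_CP1_map_def smooth_map_CxM_def G0_def by auto
  have cGi: "continuous_on (UNIV \<times> M) Gi" and GiM: "Gi ` (UNIV \<times> M) \<subseteq> M"
    using sF unfolding smooth_CP1_map_def smooth_map_CxM_def Gi_def by auto
  have cs: "continuous_on ((- {0}) \<times> M) \<sigma>" and sM: "\<sigma> ` ((- {0}) \<times> M) \<subseteq> M"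
    and s1: "\<And>x. x \<in> M \<Longrightarrow> \<sigma> (1, x) = x"
    and sc: "\<And>\<xi> \<eta> x. \<xi> \<noteq> 0 \<Longrightarrow> \<eta> \<noteq> 0 \<Longrightarrow> x \<in> M \<Longrightarrow> \<sigma> (\<xi>, \<sigma> (\<eta>, x)) = \<sigma> (\<xi> * \<eta>, x)"
    using assms(2) unfolding smooth_Cstar_action_def smooth_map_CxM_def by auto
  define a where "a = (\<lambda>n. of_nat (Suc n) :: complex)"
  have a0: "a n \<noteq> 0" for n unfolding a_def by (metis of_nat_eq_0_iff nat.simps(3))
  have ia: "(\<lambda>n. inverse (a n)) \<longlonglongrightarrow> 0"
    unfolding a_def using LIMSEQ_Suc[OF lim_inverse_n] by simp
  define p where "p = Gi (0, x)"
  have pM: "p \<in> M" using GiM x unfolding p_def by auto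
  have yM: "\<sigma> (a n, x) \<in> M" for n using sM a0 x by auto
  have Gia: "Gi (inverse w, y) = \<sigma> (w, y)" if "w \<noteq> 0" "y \<in> M" for w y
    using that ext unfolding Gi_def by simp
  have G0a: "G0 (w, y) = \<sigma> (w, y)" if "w \<noteq> 0" "y \<in> M" for w y
    using that ext unfolding G0_def by simp
  have lim1: "(\<lambda>n. Gi (inverse (a n), x)) \<longlonglongrightarrow> p"
    unfolding p_def
    by (rule continuous_on_tendsto_compose[OF cGi, of "\<lambda>n. (inverse (a n), x)", simplified])
       (auto intro!: tendsto_Pair ia x)
  hence ylim: "(\<lambda>n. \<sigma> (a n, x)) \<longlonglongrightarrow> p" using Gia[OF a0 x] by simp
  have fixp: "\<sigma> (\<eta>, p) = p" if \<eta>: "\<eta> \<noteq> 0" for \<eta>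
  proof -
    have ie: "(\<lambda>n. inverse (\<eta> * a n)) \<longlonglongrightarrow> 0"
      using tendsto_mult[OF tendsto_const ia, of "inverse \<eta>"] by (simp add: inverse_mult_distrib mult.commute)
    have l1: "(\<lambda>n. \<sigma> (\<eta>, \<sigma> (a n, x))) \<longlonglongrightarrow> \<sigma> (\<eta>, p)"
      by (rule continuous_on_tendsto_compose[OF cs, of "\<lambda>n. (\<eta>, \<sigma> (a n, x))", simplified])
         (auto intro!: tendsto_Pair ylim \<eta> pM yM always_eventually)
    have l2: "(\<lambda>n. Gi (inverse (\<eta> * a n), x)) \<longlonglongrightarrow> p"
      unfolding p_def
    proof (rule continuous_on_tendsto_compose[OF cGi, of "\<lambda>n. (inverse (\<eta> * a n), x)" "(0, x)" sequentially])
      show "(\<lambda>n. (inverse (\<eta> * a n), x)) \<longlonglongrightarrow> (0, x)"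
        by (rule tendsto_Pair[OF ie tendsto_const])
    qed (auto simp: x)
    have eq: "Gi (inverse (\<eta> * a n), x) = \<sigma> (\<eta>, \<sigma> (a n, x))" for n
    proof -
      have "\<eta> * a n \<noteq> 0" using \<eta> a0[of n] by simp
      then show ?thesis using Gia[of "\<eta> * a n" x] sc[OF \<eta> a0 x] x by simp
    qed
    have "(\<lambda>n. \<sigma> (\<eta>, \<sigma> (a n, x))) \<longlonglongrightarrow> p" using l2 unfolding eq .
    from LIMSEQ_unique[OF l1 this] show ?thesis .
  qed
  have l3: "(\<lambda>n. G0 (inverse (a n), p)) \<longlonglongrightarrow> G0 (0, p)"
    by (rule continuous_on_tendsto_compose[OF cG0, of "\<lambda>n. (inverse (a n), p)", simplified])
       (auto intro!: tendsto_Pair ia pM)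
  have eq3: "G0 (inverse (a n), p) = p" for n
    using G0a[of "inverse (a n)" p] fixp[of "inverse (a n)"] a0[of n] pM by simp
  have P0p: "G0 (0, p) = p" using LIMSEQ_unique[OF l3] unfolding eq3 by simp
  have l4: "(\<lambda>n. G0 (inverse (a n), \<sigma> (a n, x))) \<longlonglongrightarrow> G0 (0, p)"
    by (rule continuous_on_tendsto_compose[OF cG0, of "\<lambda>n. (inverse (a n), \<sigma> (a n, x))", simplified])
       (auto intro!: tendsto_Pair ia pM ylim yM always_eventually)
  have eq4: "G0 (inverse (a n), \<sigma> (a n, x)) = x" for n
    using G0a[of "inverse (a n)" "\<sigma> (a n, x)"] sc[of "inverse (a n)" "a n" x] a0[of n] x yM[of n] s1[OF x]
    by simp
  have "(\<lambda>n. x) \<longlonglongrightarrow> p" using l4 P0p unfolding eq4 by simp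
  hence "x = p" using LIMSEQ_const_iff by blast
  thus "\<sigma> (\<xi>, x) = x" using fixp[OF \<xi>] by simp
qed

end
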